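(* Let $n\in\mathbb Z^+$, let $d,d'$ be cyclotomic patterns of index $n$, let $p$ be a prime with $p\equiv1\pmod n$, and let $f,g$ be the periodic sequences of length $p$ from $d$ and $d'$. Then $P_{f,g}(0)=\frac{p-1}{n}\langle d,d'\rangle=(p-1)\langle\hat d,\hat{d'}\rangle$, and for every $u\in\mathbb Z$, \[P_{f,g}(\alpha_p^u)=\sum_{j,k\in\mathbb Z/n\mathbb Z}(k,j)\,d_{j+u}\overline{d'_{k+u}}.\]
   Context: For each prime $p$, $\alpha_p$ is a fixed primitive element of $\mathbb F_p$ and, for $n\mid p-1$, $\mathbb F_p^{*n}$ is the subgroup of $n$th powers, with classes $\alpha_p^k\mathbb F_p^{*n}$ ($k\in\mathbb Z/n\mathbb Z$). The cyclotomic number $(j,k)$ over $\mathbb F_p$ is $|(1+\alpha_p^j\mathbb F_p^{*n})\cap\alpha_p^k\mathbb F_p^{*n}|$, where $1+S=\{1+b:b\in S\}$. A cyclotomic pattern of index $n$ is $d:\mathbb Z/n\mathbb Z\to\mathbb C$; the periodic sequence of length $p$ from $d$ has $f_0=0$, $f_h=d_k$ for $h\in\alpha_p^k\mathbb F_p^{*n}$. $P_{f,g}(s)=\sum_{j\in\mathbb Z/p\mathbb Z}f_{j+s}\overline{g_j}$. $\langle a,b\rangle=\sum a_j\overline{b_j}$, $\hat a_j=n^{-1}\sum_k\exp(-2\pi ijk/n)a_k$. *)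

theory Defs
  imports "HOL-Analysis.Analysis" "HOL-Number_Theory.Number_Theory"
begin

(* Elements of F_p are represented by integers modulo p; alpha :: nat is a
   primitive root modulo p (residue_primroot p alpha). *)

definition cyc_class :: "nat \<Rightarrow> nat \<Rightarrow> nat \<Rightarrow> int \<Rightarrow> int set" where
  "cyc_class p n \<alpha> k =
     {h. \<exists>b::int. \<not> int p dvd b \<and> [h = int \<alpha> ^ nat (k mod int n) * b ^ n] (mod int p)}"

(* alpha_p^u in F_p^* for u \<in> Z (exponent reduced modulo p - 1, the order of alpha) *)
definition alpha_pow :: "nat \<Rightarrow> nat \<Rightarrow> int \<Rightarrow> int" where
  "alpha_pow p \<alpha> u = int \<alpha> ^ nat (u mod (int p - 1))"

definition cyc_seq :: "nat \<Rightarrow> nat \<Rightarrow> nat \<Rightarrow> (int \<Rightarrow> complex) \<Rightarrow> int \<Rightarrow> complex" where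
  "cyc_seq p n \<alpha> d h =
     (if int p dvd h then 0
      else d (THE k. k \<in> {0..<int n} \<and> h \<in> cyc_class p n \<alpha> k))"

definition corr :: "nat \<Rightarrow> (int \<Rightarrow> complex) \<Rightarrow> (int \<Rightarrow> complex) \<Rightarrow> int \<Rightarrow> complex" where
  "corr p f g s = (\<Sum>j\<in>{0..<int p}. f ((j + s) mod int p) * cnj (g j))"

definition cyc_num :: "nat \<Rightarrow> nat \<Rightarrow> nat \<Rightarrow> int \<Rightarrow> int \<Rightarrow> nat" where
  "cyc_num p n \<alpha> j k =
     card {x \<in> {0..<int p}. (\<exists>b \<in> cyc_class p n \<alpha> j. [x = 1 + b] (mod int p))
                            \<and> x \<in> cyc_class p n \<alpha> k}"

definition pat_inner :: "nat \<Rightarrow> (int \<Rightarrow> complex) \<Rightarrow> (int \<Rightarrow> complex) \<Rightarrow> complex" where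
  "pat_inner n a b = (\<Sum>j\<in>{0..<int n}. a j * cnj (b j))"

definition pat_hat :: "nat \<Rightarrow> (int \<Rightarrow> complex) \<Rightarrow> int \<Rightarrow> complex" where
  "pat_hat n a j = (1 / of_nat n) *
     (\<Sum>k\<in>{0..<int n}. exp (- 2 * pi * \<i> * of_int j * of_int k / of_nat n) * a k)"

end

theory Submission
  imports Defs
begin

lemma int_sum: "(\<Sum>k\<in>{0..<int n}. F k) = (\<Sum>i<n. F (int i))"
proof -
  have "{0..<int n} = int ` {0..<n}" using image_int_atLeastLessThan[of 0 n] by simp
  hence "(\<Sum>k\<in>{0..<int n}. F k) = (\<Sum>i\<in>{0..<n}. F (int i))"
    by (simp add: sum.reindex)
  thus ?thesis by (simp add: atLeast0LessThan)
qed

lemma sum_periodic: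
  fixes D :: "int \<Rightarrow> 'a::comm_semiring_1"
  shows "(\<Sum>e<m*n. D (int e mod int n)) = of_nat m * (\<Sum>k\<in>{0..<int n}. D k)"
proof -
  have "(\<Sum>e<m*n. D (int e mod int n)) = (\<Sum>q<m. \<Sum>e\<in>{q*n..<q*n+n}. D (int e mod int n))"
    by (simp add: sum.nat_group)
  also have "\<dots> = (\<Sum>q<m. \<Sum>i<n. D (int i))"
  proof (rule sum.cong[OF refl])
    fix q
    have "(\<Sum>e\<in>{q*n..<q*n+n}. D (int e mod int n)) = (\<Sum>i\<in>{0..<n}. D (int (i + q*n) mod int n))"
      using sum.shift_bounds_nat_ivl[of "\<lambda>e. D (int e mod int n)" 0 "q*n" n] by (simp add: add.commute)
    also have "\<dots> = (\<Sum>i<n. D (int i))"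
      by (rule sum.cong) (auto simp: atLeast0LessThan)
    finally show "(\<Sum>e\<in>{q*n..<q*n+n}. D (int e mod int n)) = (\<Sum>i<n. D (int i))" .
  qed
  also have "\<dots> = of_nat m * (\<Sum>k\<in>{0..<int n}. D k)" by (simp add: int_sum)
  finally show ?thesis .
qed

lemma orth:
  assumes n: "n > 0" and k: "k \<in> {0..<int n}" and l: "l \<in> {0..<int n}"
  shows "(\<Sum>j\<in>{0..<int n}. exp (- 2 * pi * \<i> * of_int j * of_int k / of_nat n)
           * cnj (exp (- 2 * pi * \<i> * of_int j * of_int l / of_nat n)))
         = (if k = l then of_nat n else 0)"
proof -
  define w where "w = 2 * pi * \<i> * of_int (l - k) / (of_nat n :: complex)"
  define z where "z = exp w"
  have trm: "exp (- 2 * pi * \<i> * of_int (int i) * of_int k / of_nat n)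
           * cnj (exp (- 2 * pi * \<i> * of_int (int i) * of_int l / of_nat n)) = z ^ i" for i
  proof -
    have "exp (- 2 * pi * \<i> * of_int (int i) * of_int k / of_nat n)
           * cnj (exp (- 2 * pi * \<i> * of_int (int i) * of_int l / of_nat n))
        = exp (- 2 * pi * \<i> * of_int (int i) * of_int k / of_nat n
               + cnj (- 2 * pi * \<i> * of_int (int i) * of_int l / of_nat n))"
      by (simp only: exp_cnj exp_add)
    also have "- 2 * pi * \<i> * of_int (int i) * of_int k / of_nat n
               + cnj (- 2 * pi * \<i> * of_int (int i) * of_int l / of_nat n) = of_nat i * w"
      using n unfolding w_def by (simp add: field_simps)
    finally show ?thesis by (simp add: z_def exp_of_nat_mult)
  qed
  have "(\<Sum>j\<in>{0..<int n}. exp (- 2 * pi * \<i> * of_int j * of_int k / of_nat n)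
           * cnj (exp (- 2 * pi * \<i> * of_int j * of_int l / of_nat n))) = (\<Sum>i<n. z ^ i)"
    by (simp only: int_sum trm)
  also have "\<dots> = (if k = l then of_nat n else 0)"
  proof (cases "k = l")
    case True
    hence "z = 1" by (simp add: z_def w_def)
    thus ?thesis using True by simp
  next
    case False
    have zn: "z ^ n = 1"
    proof -
      have "z ^ n = exp (of_nat n * w)" by (simp add: z_def exp_of_nat_mult)
      also have "of_nat n * w = \<i> * (complex_of_int (l - k) * (complex_of_real pi * 2))"
        using n unfolding w_def by (simp add: field_simps)
      finally show ?thesis by (simp only: exp_2pi_1_int)
    qed
    have "z \<noteq> 1"
    proof
      assume "z = 1"
      then obtain m where m: "Im w = real_of_int (2 * m) * pi" unfolding z_def exp_eq_1 by blast
      have "Im w = 2 * pi * of_int (l - k) / of_nat n" unfolding w_def by simp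
      with m have "(2 * pi) * real_of_int (l - k) = (2 * pi) * (real_of_int m * real n)" using n
        by (simp add: field_simps)
      hence "real_of_int (l - k) = real_of_int m * real n"
        using mult_cancel_left[of "2 * pi"] pi_gt_zero by simp
      hence lk: "l - k = m * int n" by (metis of_int_eq_iff of_int_mult of_int_of_nat_eq)
      show False
      proof (cases "m = 0")
        case True thus False using lk False by simp
      next
        case mf: False
        have "\<bar>l - k\<bar> < int n" using k l by auto
        moreover have "\<bar>m * int n\<bar> \<ge> int n" using mf n by (simp add: abs_mult)
        ultimately show False using lk by simp
      qed
    qed
    thus ?thesis using False zn by (simp add: geometric_sum)
  qed
  finally show ?thesis .
qed

lemma parseval:
  assumes n: "n > 0"
  shows "pat_inner n (pat_hat n a) (pat_hat n b) = pat_inner n a b / of_nat n"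
proof -
  let ?E = "\<lambda>j k. exp (- 2 * pi * \<i> * of_int j * of_int k / of_nat n)"
  let ?I = "{0..<int n}"
  have "pat_inner n (pat_hat n a) (pat_hat n b)
     = (\<Sum>j\<in>?I. (1 / of_nat n) * (\<Sum>k\<in>?I. ?E j k * a k) * cnj ((1 / of_nat n) * (\<Sum>l\<in>?I. ?E j l * b l)))"
    unfolding pat_inner_def pat_hat_def by simp
  also have "\<dots> = (\<Sum>j\<in>?I. \<Sum>l\<in>?I. \<Sum>k\<in>?I. (1 / of_nat n)^2 * (a k * cnj (b l)) * (?E j k * cnj (?E j l)))"
    by (simp add: sum_distrib_left sum_distrib_right cnj_sum power2_eq_square mult_ac)
  also have "\<dots> = (\<Sum>l\<in>?I. \<Sum>j\<in>?I. \<Sum>k\<in>?I. (1 / of_nat n)^2 * (a k * cnj (b l)) * (?E j k * cnj (?E j l)))"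
    by (rule sum.swap)
  also have "\<dots> = (\<Sum>l\<in>?I. \<Sum>k\<in>?I. \<Sum>j\<in>?I. (1 / of_nat n)^2 * (a k * cnj (b l)) * (?E j k * cnj (?E j l)))"
    by (intro sum.cong refl sum.swap)
  also have "\<dots> = (\<Sum>l\<in>?I. \<Sum>k\<in>?I. (1 / of_nat n)^2 * (a k * cnj (b l)) * (\<Sum>j\<in>?I. ?E j k * cnj (?E j l)))"
    by (simp only: sum_distrib_left)
  also have "\<dots> = (\<Sum>l\<in>?I. \<Sum>k\<in>?I. (1 / of_nat n)^2 * (a k * cnj (b l)) * (if k = l then of_nat n else 0))"
  proof (intro sum.cong refl)
    fix l k assume l: "l \<in> ?I" and k: "k \<in> ?I"
    show "(1 / of_nat n)^2 * (a k * cnj (b l)) * (\<Sum>j\<in>?I. ?E j k * cnj (?E j l))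
        = (1 / of_nat n)^2 * (a k * cnj (b l)) * (if k = l then of_nat n else 0)"
      by (simp only: orth[OF n k l])
  qed
  also have "\<dots> = (\<Sum>l\<in>?I. (1 / of_nat n)^2 * (a l * cnj (b l)) * of_nat n)"
    by (simp add: if_distrib cong: if_cong)
  also have "\<dots> = pat_inner n a b / of_nat n"
    unfolding pat_inner_def using n by (simp add: sum_divide_distrib power2_eq_square field_simps)
  finally show ?thesis .
qed

locale cyc =
  fixes p n \<alpha> :: nat
  assumes npos: "n > 0" and pp: "prime p" and pn: "[p = 1] (mod n)"
    and prim: "residue_primroot p \<alpha>"
begin

lemma p1: "p > 1" using pp prime_gt_1_nat by blast

lemma ord_eq: "ord p \<alpha> = p - 1"
  using prim pp by (simp add: residue_primroot_def totient_prime)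

lemma cop: "coprime p \<alpha>" using prim by (simp add: residue_primroot_def)

lemma ndvd: "n dvd p - 1"
  using pn p1 by (metis cong_to_1_nat)

lemma pow_cong: "[int \<alpha> ^ a = int \<alpha> ^ b] (mod int p) \<longleftrightarrow> [a = b] (mod (p - 1))"
proof -
  have "[int \<alpha> ^ a = int \<alpha> ^ b] (mod int p) \<longleftrightarrow> [\<alpha> ^ a = \<alpha> ^ b] (mod p)"
    by (metis cong_int_iff of_nat_power)
  also have "\<dots> \<longleftrightarrow> [a = b] (mod ord p \<alpha>)" using order_divides_expdiff cop by blast
  finally show ?thesis by (simp add: ord_eq)
qed

lemma alpha_ndvd: "\<not> int p dvd int \<alpha> ^ e"
proof
  assume "int p dvd int \<alpha> ^ e"
  hence "p dvd \<alpha> ^ e" by (metis int_dvd_int_iff of_nat_power)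
  hence "p dvd \<alpha>" using pp prime_dvd_power by blast
  thus False using cop pp by (metis coprime_absorb_left not_prime_unit)
qed

lemma dlog: assumes "\<not> int p dvd h" shows "\<exists>e<p-1. [int \<alpha> ^ e = h] (mod int p)"
proof -
  have bij: "bij_betw (\<lambda>i. \<alpha> ^ i mod p) {..<totient p} (totatives p)"
    using residue_primroot_is_generator p1 prim by blast
  have hm: "nat (h mod int p) \<in> totatives p"
  proof -
    have "h mod int p \<noteq> 0" using assms by (simp add: dvd_eq_mod_eq_0)
    moreover have "h mod int p \<ge> 0" "h mod int p < int p" using p1 by auto
    ultimately show ?thesis using pp
      by (auto simp: totatives_prime)
  qed
  with bij have "nat (h mod int p) \<in> (\<lambda>i. \<alpha> ^ i mod p) ` {..<totient p}"
    by (simp add: bij_betw_def)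
  then obtain i where i: "i < totient p" "\<alpha> ^ i mod p = nat (h mod int p)"
    by auto
  have "int (\<alpha> ^ i mod p) = h mod int p" using i p1 by simp
  hence "[int \<alpha> ^ i = h] (mod int p)"
    by (metis cong_def of_nat_mod of_nat_power)
  thus ?thesis using i pp by (auto simp: totient_prime)
qed

lemma P_prime: "prime (int p)" using pp by simp

lemma class_iff: assumes h: "[int \<alpha> ^ e = h] (mod int p)"
  shows "h \<in> cyc_class p n \<alpha> k \<longleftrightarrow> [int e = k] (mod int n)"
proof
  assume "h \<in> cyc_class p n \<alpha> k"
  then obtain b where b: "\<not> int p dvd b" "[h = int \<alpha> ^ nat (k mod int n) * b ^ n] (mod int p)"
    by (auto simp: cyc_class_def)
  obtain t where t: "[int \<alpha> ^ t = b] (mod int p)" using dlog b(1) by blast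
  have "[int \<alpha> ^ nat (k mod int n) * (int \<alpha> ^ t) ^ n = int \<alpha> ^ nat (k mod int n) * b ^ n] (mod int p)"
    by (intro cong_mult cong_pow t cong_refl)
  hence "[int \<alpha> ^ e = int \<alpha> ^ (nat (k mod int n) + t * n)] (mod int p)"
  proof -
    have "int \<alpha> ^ (nat (k mod int n) + t * n) = int \<alpha> ^ nat (k mod int n) * (int \<alpha> ^ t) ^ n"
      by (simp add: power_add power_mult)
    thus ?thesis using h b(2) \<open>[int \<alpha> ^ nat (k mod int n) * (int \<alpha> ^ t) ^ n = _] (mod _)\<close>
      by (metis (no_types, lifting) cong_sym cong_trans)
  qed
  hence "[e = nat (k mod int n) + t * n] (mod (p - 1))" by (simp add: pow_cong)
  hence "[e = nat (k mod int n) + t * n] (mod n)" using ndvd cong_dvd_modulus_nat by blast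
  hence "[int e = int (nat (k mod int n) + t * n)] (mod int n)" using cong_int_iff by blast
  hence "[int e = k mod int n + int t * int n] (mod int n)" using npos by simp
  moreover have "[k mod int n + int t * int n = k] (mod int n)"
    by (simp add: cong_def)
  ultimately show "[int e = k] (mod int n)" using cong_trans by blast
next
  assume ek: "[int e = k] (mod int n)"
  have em: "nat (k mod int n) = e mod n"
    using ek unfolding cong_def by (metis nat_int of_nat_mod)
  define b where "b = int \<alpha> ^ (e div n)"
  have "int \<alpha> ^ e = int \<alpha> ^ (e mod n + (e div n) * n)" by simp
  also have "\<dots> = int \<alpha> ^ nat (k mod int n) * b ^ n"
    unfolding b_def em power_add power_mult by simp
  finally have "[h = int \<alpha> ^ nat (k mod int n) * b ^ n] (mod int p)"
    using h by (metis cong_sym)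
  moreover have "\<not> int p dvd b" unfolding b_def by (rule alpha_ndvd)
  ultimately show "h \<in> cyc_class p n \<alpha> k" unfolding cyc_class_def by blast
qed

lemma class_dvd: assumes "int p dvd h" shows "h \<notin> cyc_class p n \<alpha> k"
proof
  assume "h \<in> cyc_class p n \<alpha> k"
  then obtain b where b: "\<not> int p dvd b" "[h = int \<alpha> ^ nat (k mod int n) * b ^ n] (mod int p)"
    by (auto simp: cyc_class_def)
  have "int p dvd int \<alpha> ^ nat (k mod int n) * b ^ n"
    using b(2) assms by (metis cong_dvd_iff)
  hence "int p dvd int \<alpha> ^ nat (k mod int n) \<or> int p dvd b ^ n"
    using P_prime prime_dvd_mult_iff by blast
  thus False using alpha_ndvd b(1) P_prime prime_dvd_power by blast
qed

lemma the_class: assumes h: "[int \<alpha> ^ e = h] (mod int p)"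
  shows "(THE k. k \<in> {0..<int n} \<and> h \<in> cyc_class p n \<alpha> k) = int e mod int n"
proof (rule the_equality)
  show "int e mod int n \<in> {0..<int n} \<and> h \<in> cyc_class p n \<alpha> (int e mod int n)"
    using npos by (simp add: class_iff[OF h] cong_def)
next
  fix k assume "k \<in> {0..<int n} \<and> h \<in> cyc_class p n \<alpha> k"
  hence "k \<in> {0..<int n}" "[int e = k] (mod int n)" using class_iff[OF h] by auto
  thus "k = int e mod int n" unfolding cong_def by simp
qed

lemma seq_val: assumes h: "[int \<alpha> ^ e = h] (mod int p)"
  shows "cyc_seq p n \<alpha> d h = d (int e mod int n)"
proof -
  have "\<not> int p dvd h" using h alpha_ndvd by (metis cong_dvd_iff)
  thus ?thesis unfolding cyc_seq_def the_class[OF h] by simp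
qed

lemma seq_dvd: "int p dvd h \<Longrightarrow> cyc_seq p n \<alpha> d h = 0"
  unfolding cyc_seq_def by simp

lemma seq_cong: assumes "[h1 = h2] (mod int p)"
  shows "cyc_seq p n \<alpha> d h1 = cyc_seq p n \<alpha> d h2"
proof (cases "int p dvd h1")
  case True
  hence "int p dvd h2" using assms cong_dvd_iff by blast
  thus ?thesis using True by (simp add: seq_dvd)
next
  case False
  then obtain e where e: "[int \<alpha> ^ e = h1] (mod int p)" using dlog by blast
  hence "[int \<alpha> ^ e = h2] (mod int p)" using assms cong_trans by blast
  thus ?thesis using e by (simp add: seq_val)
qed

lemma img: "(\<lambda>e. int \<alpha> ^ e mod int p) ` {..<p-1} = {1..<int p}"
proof
  show "(\<lambda>e. int \<alpha> ^ e mod int p) ` {..<p-1} \<subseteq> {1..<int p}"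
  proof
    fix x assume "x \<in> (\<lambda>e. int \<alpha> ^ e mod int p) ` {..<p-1}"
    then obtain e where x: "x = int \<alpha> ^ e mod int p" by blast
    have "x \<noteq> 0" using alpha_ndvd[of e] x by (simp add: dvd_eq_mod_eq_0)
    moreover have "x \<ge> 0" "x < int p" using x p1 by auto
    ultimately show "x \<in> {1..<int p}" by simp
  qed
next
  show "{1..<int p} \<subseteq> (\<lambda>e. int \<alpha> ^ e mod int p) ` {..<p-1}"
  proof
    fix j assume j: "j \<in> {1..<int p}"
    hence "\<not> int p dvd j" using zdvd_not_zless by auto
    then obtain e where e: "e < p - 1" "[int \<alpha> ^ e = j] (mod int p)" using dlog by blast
    hence "int \<alpha> ^ e mod int p = j" using j by (simp add: cong_def)
    thus "j \<in> (\<lambda>e. int \<alpha> ^ e mod int p) ` {..<p-1}" using e(1) by force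
  qed
qed

lemma inj: "inj_on (\<lambda>e. int \<alpha> ^ e mod int p) {..<p-1}"
proof (rule inj_onI)
  fix a b assume a: "a \<in> {..<p-1}" and b: "b \<in> {..<p-1}"
    and eq: "int \<alpha> ^ a mod int p = int \<alpha> ^ b mod int p"
  hence "[a = b] (mod (p - 1))" using pow_cong by (simp add: cong_def)
  thus "a = b" using a b by (simp add: cong_less_modulus_unique_nat)
qed

lemma corr0: "corr p (cyc_seq p n \<alpha> d) (cyc_seq p n \<alpha> d') 0
   = (\<Sum>e<p-1. d (int e mod int n) * cnj (d' (int e mod int n)))"
proof -
  let ?f = "cyc_seq p n \<alpha> d" and ?g = "cyc_seq p n \<alpha> d'"
  have "corr p ?f ?g 0 = (\<Sum>j\<in>{0..<int p}. ?f j * cnj (?g j))"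
    unfolding corr_def by (rule sum.cong) auto
  also have "{0..<int p} = insert 0 {1..<int p}" using p1 by auto
  also have "(\<Sum>j\<in>insert 0 {1..<int p}. ?f j * cnj (?g j)) = (\<Sum>j\<in>{1..<int p}. ?f j * cnj (?g j))"
    by (simp add: seq_dvd)
  also have "\<dots> = (\<Sum>e<p-1. ?f (int \<alpha> ^ e mod int p) * cnj (?g (int \<alpha> ^ e mod int p)))"
    by (subst img[symmetric], subst sum.reindex[OF inj]) simp
  also have "\<dots> = (\<Sum>e<p-1. d (int e mod int n) * cnj (d' (int e mod int n)))"
  proof (rule sum.cong[OF refl])
    fix e
    have c: "[int \<alpha> ^ e = int \<alpha> ^ e mod int p] (mod int p)" by (simp add: cong_def)
    show "?f (int \<alpha> ^ e mod int p) * cnj (?g (int \<alpha> ^ e mod int p)) = d (int e mod int n) * cnj (d' (int e mod int n))"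
      using seq_val[OF c] by simp
  qed
  finally show ?thesis .
qed

definition CL :: "int \<Rightarrow> int" where
  "CL h = (THE k. k \<in> {0..<int n} \<and> h \<in> cyc_class p n \<alpha> k)"

lemma CL_val: "[int \<alpha> ^ e = h] (mod int p) \<Longrightarrow> CL h = int e mod int n"
  unfolding CL_def by (rule the_class)

lemma CL_in: assumes "\<not> int p dvd h" shows "CL h \<in> {0..<int n}"
proof -
  obtain e where e: "[int \<alpha> ^ e = h] (mod int p)" using dlog assms by blast
  show ?thesis using CL_val[OF e] npos by simp
qed

lemma CL_eq: assumes "\<not> int p dvd h" "k \<in> {0..<int n}"
  shows "h \<in> cyc_class p n \<alpha> k \<longleftrightarrow> CL h = k"
proof -
  obtain e where e: "[int \<alpha> ^ e = h] (mod int p)" using dlog assms by blast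
  have "k mod int n = k" using assms(2) by simp
  thus ?thesis using CL_val[OF e] class_iff[OF e] unfolding cong_def by auto
qed

lemma class_ndvd: "h \<in> cyc_class p n \<alpha> k \<Longrightarrow> \<not> int p dvd h"
  using class_dvd by blast

lemma S_eq: assumes j: "j \<in> {0..<int n}" and k: "k \<in> {0..<int n}"
  shows "{x \<in> {0..<int p}. (\<exists>b \<in> cyc_class p n \<alpha> k. [x = 1 + b] (mod int p)) \<and> x \<in> cyc_class p n \<alpha> j}
       = {x \<in> {x \<in> {x \<in> {0..<int p}. \<not> int p dvd x \<and> \<not> int p dvd (x - 1)}. CL x = j}. CL (x - 1) = k}"
    (is "?S = ?R")
proof
  show "?S \<subseteq> ?R"
  proof
    fix x assume x: "x \<in> ?S"
    then obtain b where b: "b \<in> cyc_class p n \<alpha> k" "[x = 1 + b] (mod int p)" by blast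
    have xj: "x \<in> cyc_class p n \<alpha> j" using x by blast
    have c: "[x - 1 = b] (mod int p)" using b(2) by (metis add.commute cong_diff_iff_cong_0 diff_diff_eq2 cong_def mod_0 ) 
    have bn: "\<not> int p dvd b" using class_ndvd b(1) by blast
    have x1: "\<not> int p dvd (x - 1)" using bn c cong_dvd_iff by blast
    have x0: "\<not> int p dvd x" using class_ndvd xj by blast
    have "x - 1 \<in> cyc_class p n \<alpha> k"
    proof -
      obtain e where e: "[int \<alpha> ^ e = b] (mod int p)" using dlog bn by blast
      hence e': "[int \<alpha> ^ e = x - 1] (mod int p)" using c cong_sym cong_trans by blast
      show ?thesis using class_iff[OF e] class_iff[OF e'] b(1) by blast
    qed
    thus "x \<in> ?R" using x x0 x1 xj CL_eq[OF x0 j] CL_eq[OF x1 k] by auto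
  qed
next
  show "?R \<subseteq> ?S"
  proof
    fix x assume x: "x \<in> ?R"
    hence x0: "\<not> int p dvd x" and x1: "\<not> int p dvd (x - 1)" and "CL x = j" "CL (x - 1) = k" by auto
    hence "x \<in> cyc_class p n \<alpha> j" "x - 1 \<in> cyc_class p n \<alpha> k" using CL_eq[OF x0 j] CL_eq[OF x1 k] by auto
    moreover have "[x = 1 + (x - 1)] (mod int p)" by simp
    ultimately show "x \<in> ?S" using x by blast
  qed
qed

lemma corr_u:
  "corr p (cyc_seq p n \<alpha> d) (cyc_seq p n \<alpha> d') (alpha_pow p \<alpha> u)
   = (\<Sum>j\<in>{0..<int n}. \<Sum>k\<in>{0..<int n}.
        of_nat (cyc_num p n \<alpha> k j) * d ((j + u) mod int n) * cnj (d' ((k + u) mod int n)))"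
proof -
  let ?f = "cyc_seq p n \<alpha> d" and ?g = "cyc_seq p n \<alpha> d'"
  let ?P = "int p" and ?I = "{0..<int n}"
  define v where "v = nat (u mod (?P - 1))"
  define a where "a = int \<alpha> ^ v"
  have a: "alpha_pow p \<alpha> u = a" unfolding a_def v_def alpha_pow_def ..
  have vu: "int v mod int n = u mod int n"
  proof -
    have "int n dvd ?P - 1" using ndvd p1 by (metis of_nat_1 of_nat_diff of_nat_dvd_iff less_imp_le)
    moreover have "int v = u mod (?P - 1)" unfolding v_def using p1 by simp
    ultimately show ?thesis by (simp add: mod_mod_cancel)
  qed
  have ca: "coprime a ?P"
  proof -
    have "coprime ?P a" unfolding a_def by (rule prime_imp_coprime[OF P_prime alpha_ndvd])
    thus ?thesis by (simp add: coprime_commute)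
  qed
  define \<phi> where "\<phi> x = (a * (x - 1)) mod ?P" for x
  have bij: "bij_betw \<phi> {0..<?P} {0..<?P}"
  proof -
    have inj: "inj_on \<phi> {0..<?P}"
    proof (rule inj_onI)
      fix x y assume x: "x \<in> {0..<?P}" and y: "y \<in> {0..<?P}" and "\<phi> x = \<phi> y"
      hence "[a * (x - 1) = a * (y - 1)] (mod ?P)" unfolding \<phi>_def cong_def by simp
      hence "[x - 1 = y - 1] (mod ?P)" using cong_mult_lcancel[OF ca] by blast
      hence "[x = y] (mod ?P)" by (metis cong_add_rcancel diff_add_cancel)
      thus "x = y" using x y unfolding cong_def by simp
    qed
    have "\<phi> ` {0..<?P} \<subseteq> {0..<?P}" unfolding \<phi>_def using p1 by auto
    hence "\<phi> ` {0..<?P} = {0..<?P}" using endo_inj_surj inj by blast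
    thus ?thesis using inj by (simp add: bij_betw_def)
  qed
  define T where "T = {x \<in> {0..<?P}. \<not> ?P dvd x \<and> \<not> ?P dvd (x - 1)}"
  define F where "F x = d ((CL x + u) mod int n) * cnj (d' ((CL (x - 1) + u) mod int n))" for x
  have key: "\<And>h. \<not> ?P dvd h \<Longrightarrow> ?f (a * h) = d ((CL h + u) mod int n)
                                    \<and> ?g (a * h) = d' ((CL h + u) mod int n)"
  proof -
    fix h assume h: "\<not> ?P dvd h"
    obtain e where e: "[int \<alpha> ^ e = h] (mod ?P)" using dlog h by blast
    have e2: "[int \<alpha> ^ (v + e) = a * h] (mod ?P)"
      unfolding a_def power_add by (rule cong_mult[OF cong_refl e])
    have "int (v + e) mod int n = (CL h + u) mod int n"
    proof -
      have "int (v + e) mod int n = (int v mod int n + int e) mod int n" by (simp add: mod_add_left_eq)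
      also have "\<dots> = (u mod int n + int e) mod int n" by (simp add: vu)
      also have "\<dots> = (u + int e) mod int n" by (simp add: mod_add_left_eq)
      also have "\<dots> = (int e mod int n + u) mod int n" by (simp add: mod_add_left_eq mod_add_right_eq add.commute)
      finally show ?thesis using CL_val[OF e] by simp
    qed
    thus "?f (a * h) = d ((CL h + u) mod int n) \<and> ?g (a * h) = d' ((CL h + u) mod int n)"
      using seq_val[OF e2] by simp
  qed
  have "corr p ?f ?g (alpha_pow p \<alpha> u) = (\<Sum>j\<in>{0..<?P}. ?f ((j + a) mod ?P) * cnj (?g j))"
    unfolding corr_def a ..
  also have "\<dots> = (\<Sum>x\<in>{0..<?P}. ?f ((\<phi> x + a) mod ?P) * cnj (?g (\<phi> x)))"
    by (rule sum.reindex_bij_betw[OF bij, symmetric])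
  also have "\<dots> = (\<Sum>x\<in>{0..<?P}. if x \<in> T then F x else 0)"
  proof (rule sum.cong[OF refl])
    fix x assume "x \<in> {0..<?P}"
    have c1: "[(\<phi> x + a) mod ?P = a * x] (mod ?P)"
    proof -
      have "(\<phi> x + a) mod ?P = (a * (x - 1) + a) mod ?P" unfolding \<phi>_def by (simp add: mod_add_left_eq)
      also have "a * (x - 1) + a = a * x" by (simp add: algebra_simps)
      finally show ?thesis by (simp add: cong_def)
    qed
    have c2: "[\<phi> x = a * (x - 1)] (mod ?P)" unfolding \<phi>_def cong_def by simp
    have "?f ((\<phi> x + a) mod ?P) * cnj (?g (\<phi> x)) = ?f (a * x) * cnj (?g (a * (x - 1)))"
      using seq_cong[OF c1] seq_cong[OF c2] by simp
    also have "\<dots> = (if x \<in> T then F x else 0)"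
    proof (cases "?P dvd x \<or> ?P dvd (x - 1)")
      case True
      hence "?P dvd a * x \<or> ?P dvd a * (x - 1)" by auto
      thus ?thesis using True unfolding T_def by (auto simp: seq_dvd)
    next
      case False
      thus ?thesis using \<open>x \<in> {0..<?P}\<close> key[of x] key[of "x - 1"] unfolding T_def F_def by auto
    qed
    finally show "?f ((\<phi> x + a) mod ?P) * cnj (?g (\<phi> x)) = (if x \<in> T then F x else 0)" .
  qed
  also have "\<dots> = (\<Sum>x\<in>T. F x)"
  proof -
    have "T = {0..<?P} \<inter> T" unfolding T_def by auto
    thus ?thesis using sum.inter_restrict[of "{0..<?P}" F T] by simp
  qed
  also have "\<dots> = (\<Sum>j\<in>?I. \<Sum>x\<in>{x \<in> T. CL x = j}. F x)"
  proof -
    have finT: "finite T" unfolding T_def by (rule finite_subset[of _ "{0..<?P}"]) auto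
    have imT: "CL ` T \<subseteq> ?I" using CL_in unfolding T_def by blast
    have fI: "finite ?I" by simp
    show ?thesis using sum.group[OF finT fI imT, of F] by simp
  qed
  also have "\<dots> = (\<Sum>j\<in>?I. \<Sum>k\<in>?I. \<Sum>x\<in>{x \<in> {x \<in> T. CL x = j}. CL (x - 1) = k}. F x)"
  proof (rule sum.cong[OF refl])
    fix j
    have finT: "finite {x \<in> T. CL x = j}" unfolding T_def by (rule finite_subset[of _ "{0..<?P}"]) auto
    have imT: "(\<lambda>x. CL (x - 1)) ` {x \<in> T. CL x = j} \<subseteq> ?I" using CL_in unfolding T_def by blast
    have fI: "finite ?I" by simp
    show "(\<Sum>x\<in>{x \<in> T. CL x = j}. F x) = (\<Sum>k\<in>?I. \<Sum>x\<in>{x \<in> {x \<in> T. CL x = j}. CL (x - 1) = k}. F x)"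
      using sum.group[OF finT fI imT, of F] by simp
  qed
  also have "\<dots> = (\<Sum>j\<in>?I. \<Sum>k\<in>?I.
        of_nat (cyc_num p n \<alpha> k j) * d ((j + u) mod int n) * cnj (d' ((k + u) mod int n)))"
  proof (rule sum.cong[OF refl], rule sum.cong[OF refl])
    fix j k assume j: "j \<in> ?I" and k: "k \<in> ?I"
    have "(\<Sum>x\<in>{x \<in> {x \<in> T. CL x = j}. CL (x - 1) = k}. F x)
        = (\<Sum>x\<in>{x \<in> {x \<in> T. CL x = j}. CL (x - 1) = k}. d ((j + u) mod int n) * cnj (d' ((k + u) mod int n)))"
      by (rule sum.cong) (auto simp: F_def)
    also have "\<dots> = of_nat (cyc_num p n \<alpha> k j) * (d ((j + u) mod int n) * cnj (d' ((k + u) mod int n)))"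
      unfolding cyc_num_def S_eq[OF j k] T_def by simp
    finally show "(\<Sum>x\<in>{x \<in> {x \<in> T. CL x = j}. CL (x - 1) = k}. F x)
        = of_nat (cyc_num p n \<alpha> k j) * d ((j + u) mod int n) * cnj (d' ((k + u) mod int n))"
      by (simp add: mult.assoc)
  qed
  finally show ?thesis .
qed

end

theorem mainTheorem18:
  fixes n p \<alpha> :: nat and d d' :: "int \<Rightarrow> complex"
  assumes "n > 0" and "prime p" and "[p = 1] (mod n)"
    and "residue_primroot p \<alpha>"
    and "\<And>k. d k = d (k mod int n)" and "\<And>k. d' k = d' (k mod int n)"
  shows "corr p (cyc_seq p n \<alpha> d) (cyc_seq p n \<alpha> d') 0
           = of_nat (p - 1) / of_nat n * pat_inner n d d'
       \<and> corr p (cyc_seq p n \<alpha> d) (cyc_seq p n \<alpha> d') 0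
           = of_nat (p - 1) * pat_inner n (pat_hat n d) (pat_hat n d')
       \<and> (\<forall>u::int. corr p (cyc_seq p n \<alpha> d) (cyc_seq p n \<alpha> d') (alpha_pow p \<alpha> u)
           = (\<Sum>j\<in>{0..<int n}. \<Sum>k\<in>{0..<int n}.
                of_nat (cyc_num p n \<alpha> k j) * d ((j + u) mod int n) * cnj (d' ((k + u) mod int n))))"
proof -
  interpret cyc p n \<alpha> using assms by unfold_locales
  define m where "m = (p - 1) div n"
  have pm: "p - 1 = m * n" unfolding m_def using ndvd by simp
  have c0: "corr p (cyc_seq p n \<alpha> d) (cyc_seq p n \<alpha> d') 0 = of_nat m * pat_inner n d d'"
    unfolding corr0 pm pat_inner_def by (rule sum_periodic)
  have e1: "of_nat (p - 1) / of_nat n * pat_inner n d d' = of_nat m * pat_inner n d d'"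
    using assms(1) unfolding pm by simp
  have e2: "of_nat (p - 1) * pat_inner n (pat_hat n d) (pat_hat n d') = of_nat m * pat_inner n d d'"
    using assms(1) unfolding parseval[OF assms(1)] pm by simp
  show ?thesis using c0 e1 e2 corr_u by simp
qed

end
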